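(* For a graph $G$, $\gamma_{(2,2,2)}(G)=4$ if and only if at least one of the following holds: (i) $\gamma_{\times2,t}(G)=4$; (ii) $\gamma_t(G)=2$ and $G$ has minimum degree $\delta=1$; (iii) $\gamma_t(G)=2$ and $\gamma_{\times2,t}(G)\ge4$.
   Context: All graphs are finite and simple; $N(v)$ is the open neighbourhood. $\gamma_{(2,2,2)}(G)$ is the minimum of $\sum_v f(v)$ over functions $f:V(G)\to\{0,1,2\}$ with $\sum_{u\in N(v)}f(u)\ge2$ for every vertex $v$ (defined when $G$ has no isolated vertex). $\gamma_t(G)$ is the total domination number (minimum size of $S$ such that every vertex has a neighbour in $S$). $\gamma_{\times2,t}(G)$ is the minimum size of $S\subseteq V(G)$ such that every vertex has at least two neighbours in $S$ (defined when $G$ has minimum degree at least $2$). *)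

theory Defs
  imports Main "HOL-Library.Extended_Nat"
begin

definition simple_graph :: "'a set \<Rightarrow> ('a \<Rightarrow> 'a \<Rightarrow> bool) \<Rightarrow> bool" where
  "simple_graph V E \<longleftrightarrow> finite V \<and> (\<forall>u v. E u v \<longrightarrow> u \<in> V \<and> v \<in> V)
     \<and> (\<forall>u v. E u v \<longrightarrow> E v u) \<and> (\<forall>v. \<not> E v v)"

definition nbhd :: "'a set \<Rightarrow> ('a \<Rightarrow> 'a \<Rightarrow> bool) \<Rightarrow> 'a \<Rightarrow> 'a set" where
  "nbhd V E v = {u \<in> V. E v u}"

definition min_degree :: "'a set \<Rightarrow> ('a \<Rightarrow> 'a \<Rightarrow> bool) \<Rightarrow> nat" where
  "min_degree V E = Min ((\<lambda>v. card (nbhd V E v)) ` V)"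

text \<open>All parameters take value \<infinity> when no feasible object exists
(i.e. when the parameter is undefined).\<close>

definition gamma_222 :: "'a set \<Rightarrow> ('a \<Rightarrow> 'a \<Rightarrow> bool) \<Rightarrow> enat" where
  "gamma_222 V E = (INF f \<in> {f :: 'a \<Rightarrow> nat. (\<forall>v\<in>V. f v \<le> 2) \<and>
        (\<forall>v\<in>V. (\<Sum>u\<in>nbhd V E v. f u) \<ge> 2)}. enat (\<Sum>v\<in>V. f v))"

definition gamma_t :: "'a set \<Rightarrow> ('a \<Rightarrow> 'a \<Rightarrow> bool) \<Rightarrow> enat" where
  "gamma_t V E = (INF S \<in> {S. S \<subseteq> V \<and> (\<forall>v\<in>V. nbhd V E v \<inter> S \<noteq> {})}. enat (card S))"

definition gamma_x2t :: "'a set \<Rightarrow> ('a \<Rightarrow> 'a \<Rightarrow> bool) \<Rightarrow> enat" where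
  "gamma_x2t V E = (INF S \<in> {S. S \<subseteq> V \<and> (\<forall>v\<in>V. card (nbhd V E v \<inter> S) \<ge> 2)}. enat (card S))"

end

theory Submission
  imports Defs
begin

lemma enat_Inf_in: "Inf (A::enat set) \<noteq> \<infinity> \<Longrightarrow> Inf A \<in> A"
  unfolding Inf_enat_def by (auto split: if_splits intro: LeastI_ex)

lemma sum01:
  assumes "finite A" "\<forall>v\<in>A. f v \<le> (1::nat)"
  shows "sum f A = card {v\<in>A. f v = 1}"
  using assms
proof (induction A rule: finite_induct)
  case empty then show ?case by simp
next
  case (insert x F)
  have eq: "{v \<in> insert x F. f v = 1} = (if f x = 1 then insert x {v\<in>F. f v = 1} else {v\<in>F. f v = 1})"
    by auto
  have "f x = 0 \<or> f x = 1" using insert by force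
  then show ?case using insert eq by auto
qed

definition feas222 where
  "feas222 V E f \<longleftrightarrow> (\<forall>v\<in>V. f v \<le> (2::nat)) \<and> (\<forall>v\<in>V. (\<Sum>u\<in>nbhd V E v. f u) \<ge> 2)"

lemma g222_le: "feas222 V E f \<Longrightarrow> gamma_222 V E \<le> enat (sum f V)"
  unfolding gamma_222_def feas222_def by (rule INF_lower) auto

lemma g222_obtain:
  assumes "gamma_222 V E = enat k"
  obtains f where "feas222 V E f" "sum f V = k"
proof -
  have "gamma_222 V E \<in> (\<lambda>f. enat (sum f V)) ` {f. feas222 V E f}"
    using enat_Inf_in[of "(\<lambda>f. enat (sum f V)) ` {f. feas222 V E f}"] assms
    unfolding gamma_222_def feas222_def by auto
  then show ?thesis using that assms by auto
qed

lemma gt_le: "S \<subseteq> V \<Longrightarrow> (\<forall>v\<in>V. nbhd V E v \<inter> S \<noteq> {}) \<Longrightarrow> gamma_t V E \<le> enat (card S)"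
  unfolding gamma_t_def by (rule INF_lower) auto

lemma gx_le: "S \<subseteq> V \<Longrightarrow> (\<forall>v\<in>V. card (nbhd V E v \<inter> S) \<ge> 2) \<Longrightarrow> gamma_x2t V E \<le> enat (card S)"
  unfolding gamma_x2t_def by (rule INF_lower) auto

lemma gt_obtain:
  assumes "gamma_t V E = enat k"
  obtains S where "S \<subseteq> V" "\<forall>v\<in>V. nbhd V E v \<inter> S \<noteq> {}" "card S = k"
proof -
  have "gamma_t V E \<in> (\<lambda>S. enat (card S)) ` {S. S \<subseteq> V \<and> (\<forall>v\<in>V. nbhd V E v \<inter> S \<noteq> {})}"
    using enat_Inf_in[of "(\<lambda>S. enat (card S)) ` {S. S \<subseteq> V \<and> (\<forall>v\<in>V. nbhd V E v \<inter> S \<noteq> {})}"] assms unfolding gamma_t_def by auto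
  then show ?thesis using that assms by auto
qed

lemma gx_obtain:
  assumes "gamma_x2t V E = enat k"
  obtains S where "S \<subseteq> V" "\<forall>v\<in>V. card (nbhd V E v \<inter> S) \<ge> 2" "card S = k"
proof -
  have "gamma_x2t V E \<in> (\<lambda>S. enat (card S)) ` {S. S \<subseteq> V \<and> (\<forall>v\<in>V. card (nbhd V E v \<inter> S) \<ge> 2)}"
    using enat_Inf_in[of "(\<lambda>S. enat (card S)) ` {S. S \<subseteq> V \<and> (\<forall>v\<in>V. card (nbhd V E v \<inter> S) \<ge> 2)}"] assms unfolding gamma_x2t_def by auto
  then show ?thesis using that assms by auto
qed

lemma empty_cases:
  assumes "V = {}"
  shows "gamma_t V E = 0" "gamma_x2t V E = 0" "gamma_222 V E = 0"
proof -
  have "gamma_t V E \<le> 0" using gt_le[of "{}" V E] assms by (simp add: zero_enat_def)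
  then show "gamma_t V E = 0" by simp
  have "gamma_x2t V E \<le> 0" using gx_le[of "{}" V E] assms by (simp add: zero_enat_def)
  then show "gamma_x2t V E = 0" by simp
  have "feas222 V E f" for f using assms unfolding feas222_def by auto
  then have "gamma_222 V E \<le> 0" using g222_le[of V E "\<lambda>_. 0"] assms by (simp add: zero_enat_def)
  then show "gamma_222 V E = 0" by simp
qed

lemma nb_fin: "simple_graph V E \<Longrightarrow> finite (nbhd V E v)"
  unfolding simple_graph_def nbhd_def by auto

lemma nb_sub: "nbhd V E v \<subseteq> V"
  unfolding nbhd_def by auto

lemma nb_mem: "u \<in> nbhd V E v \<Longrightarrow> u \<in> V"
  unfolding nbhd_def by auto

lemma nb_self: "simple_graph V E \<Longrightarrow> v \<notin> nbhd V E v"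
  unfolding simple_graph_def nbhd_def by auto

lemma gx_ge_g222: assumes G: "simple_graph V E" shows "gamma_222 V E \<le> gamma_x2t V E"
  unfolding gamma_x2t_def
proof (rule INF_greatest)
  fix S assume S: "S \<in> {S. S \<subseteq> V \<and> (\<forall>v\<in>V. 2 \<le> card (nbhd V E v \<inter> S))}"
  define f where "f = (\<lambda>v. if v \<in> S then 1 else (0::nat))"
  have fV: "finite V" using G unfolding simple_graph_def by auto
  have *: "sum f A = card (A \<inter> S)" if "finite A" for A
  proof -
    have "sum f A = card {v\<in>A. f v = 1}" using sum01[OF that, of f] unfolding f_def by auto
    also have "{v\<in>A. f v = 1} = A \<inter> S" unfolding f_def by auto
    finally show ?thesis .
  qed
  have "feas222 V E f" unfolding feas222_def using S *[OF nb_fin[OF G]] by (auto simp: f_def)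
  moreover have "V \<inter> S = S" using S by auto
  ultimately show "gamma_222 V E \<le> enat (card S)" 
    using g222_le[of V E f] *[OF fV] by auto
qed

lemma key3:
  assumes G: "simple_graph V E" and ne: "V \<noteq> {}" and f: "feas222 V E f" and s3: "sum f V \<le> 3"
  shows "\<exists>S\<subseteq>V. card S = 3 \<and> (\<forall>v\<in>V. card (nbhd V E v \<inter> S) \<ge> 2)"
proof -
  have fV: "finite V" using G unfolding simple_graph_def by auto
  have le1: "f u \<le> 1" if u: "u \<in> V" for u
  proof (rule ccontr)
    assume "\<not> f u \<le> 1"
    then have fu: "f u \<ge> 2" by simp
    have "sum f (nbhd V E u) \<ge> 2" using f u unfolding feas222_def by auto
    moreover have "sum f (nbhd V E u) \<le> sum f (V - {u})"
      by (rule sum_mono2) (use fV nb_mem nb_self[OF G] in auto)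
    moreover have "sum f V = f u + sum f (V - {u})" using sum.remove[OF fV u] .
    ultimately show False using fu s3 by linarith
  qed
  define S where "S = {v\<in>V. f v = 1}"
  have cnt: "sum f A = card (A \<inter> S)" if "finite A" "A \<subseteq> V" for A
  proof -
    have "sum f A = card {v\<in>A. f v = 1}" using sum01[OF that(1), of f] le1 that(2) by auto
    also have "{v\<in>A. f v = 1} = A \<inter> S" unfolding S_def using that(2) by auto
    finally show ?thesis .
  qed
  have deg: "\<forall>v\<in>V. card (nbhd V E v \<inter> S) \<ge> 2"
    using f cnt[OF nb_fin[OF G] nb_sub] unfolding feas222_def by auto
  have SV: "S \<subseteq> V" unfolding S_def by auto
  have cS: "card S \<le> 3" using cnt[OF fV] s3 SV by (simp add: Int_absorb1)
  obtain v where v: "v \<in> V" using ne by auto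
  have "card (nbhd V E v \<inter> S) \<ge> 2" using deg v by auto
  then have "nbhd V E v \<inter> S \<noteq> {}" by (cases "nbhd V E v \<inter> S = {}") auto
  then obtain u where u: "u \<in> nbhd V E v \<inter> S" by blast
  then have uV: "u \<in> V" using SV by auto
  have "card (nbhd V E u \<inter> S) \<ge> 2" using deg uV by auto
  moreover have "nbhd V E u \<inter> S \<subseteq> S - {u}" using nb_self[OF G] by auto
  moreover have "finite S" using SV fV finite_subset by auto
  ultimately have "card (S - {u}) \<ge> 2" using card_mono[of "S - {u}" "nbhd V E u \<inter> S"] by simp
  moreover have "card (S - {u}) = card S - 1" using u \<open>finite S\<close> by auto
  ultimately have "card S = 3" using cS by linarith
  then show ?thesis using deg SV by auto
qed

lemma key4:
  assumes G: "simple_graph V E" and f: "feas222 V E f" and s4: "sum f V = 4"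
    and u: "u \<in> V" and fu: "f u = 2"
  shows "gamma_t V E \<le> 2"
proof -
  have fV: "finite V" using G unfolding simple_graph_def by auto
  have "sum f (nbhd V E u) \<ge> 2" using f u unfolding feas222_def by auto
  have "\<exists>w\<in>nbhd V E u. f w \<noteq> 0"
  proof (rule ccontr)
    assume "\<not> ?thesis"
    then have "sum f (nbhd V E u) = 0" by simp
    then show False using \<open>sum f (nbhd V E u) \<ge> 2\<close> by simp
  qed
  then obtain w where w: "w \<in> nbhd V E u" "f w > 0" by blast
  have wu: "w \<noteq> u" using w nb_self[OF G] by auto
  have wV: "w \<in> V" by (rule nb_mem[OF w(1)])
  have r: "sum f (V - {u}) = 2" using sum.remove[OF fV u, of f] s4 fu by simp
  have r2: "sum f (V - {u} - {w}) = 2 - f w" using sum.remove[of "V - {u}" w f] fV wV wu r by simp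
  have "nbhd V E v \<inter> {u, w} \<noteq> {}" if v: "v \<in> V" for v
  proof (rule ccontr)
    assume "\<not> ?thesis"
    then have "nbhd V E v \<subseteq> V - {u} - {w}" using nb_sub[of V E v] by blast
    then have "sum f (nbhd V E v) \<le> sum f (V - {u} - {w})"
      by (intro sum_mono2) (use fV in auto)
    moreover have "sum f (nbhd V E v) \<ge> 2" using f v unfolding feas222_def by auto
    ultimately show False using r2 w(2) by linarith
  qed
  then have "gamma_t V E \<le> enat (card {u, w})" using gt_le[of "{u,w}" V E] u wV by auto
  then show ?thesis using wu by (simp add: numeral_eq_enat numeral_2_eq_2)
qed

lemma t_ge2:
  assumes G: "simple_graph V E" and ne: "V \<noteq> {}"
  shows "gamma_t V E \<ge> 2"
  unfolding gamma_t_def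
proof (rule INF_greatest)
  fix S assume S: "S \<in> {S. S \<subseteq> V \<and> (\<forall>v\<in>V. nbhd V E v \<inter> S \<noteq> {})}"
  have fV: "finite V" using G unfolding simple_graph_def by auto
  obtain v where v: "v \<in> V" using ne by auto
  then obtain u where u: "u \<in> nbhd V E v \<inter> S" using S by auto
  then have uV: "u \<in> V" using nb_mem[of u V E v] u by blast
  then obtain w where w: "w \<in> nbhd V E u \<inter> S" using S by auto
  have "w \<noteq> u" using w nb_self[OF G] by auto
  moreover have "{u, w} \<subseteq> S" using u w by auto
  moreover have "finite S" using S fV finite_subset by auto
  ultimately have "card S \<ge> 2" by (metis card_2_iff card_mono)
  then show "2 \<le> enat (card S)" by (simp add: numeral_eq_enat)
qed

lemma t2_le4:
  assumes G: "simple_graph V E" and t: "gamma_t V E = 2"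
  shows "gamma_222 V E \<le> 4"
proof -
  have fV: "finite V" using G unfolding simple_graph_def by auto
  obtain S where S: "S \<subseteq> V" "\<forall>v\<in>V. nbhd V E v \<inter> S \<noteq> {}" "card S = 2"
    using gt_obtain[of V E 2] t by (auto simp: numeral_eq_enat)
  define f where "f = (\<lambda>v. if v \<in> S then 2 else (0::nat))"
  have sm: "sum f A = card (A \<inter> S) * 2" if "finite A" for A
    using sum.inter_restrict[OF that, of "\<lambda>_. 2::nat" S] unfolding f_def by simp
  have "feas222 V E f" unfolding feas222_def
  proof (intro conjI ballI)
    fix v assume v: "v \<in> V"
    then obtain x where "x \<in> nbhd V E v \<inter> S" using S by auto
    then have "f x \<le> sum f (nbhd V E v)" using member_le_sum[of x "nbhd V E v" f] nb_fin[OF G] by auto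
    then show "2 \<le> sum f (nbhd V E v)" using \<open>x \<in> _\<close> unfolding f_def by auto
  qed (auto simp: f_def)
  then have "gamma_222 V E \<le> enat (sum f V)" by (rule g222_le)
  moreover have "sum f V = 4" using sm[OF fV] S by (simp add: Int_absorb1)
  ultimately show ?thesis by (simp add: numeral_eq_enat)
qed

theorem theorem18:
  fixes V :: "'a set" and E :: "'a \<Rightarrow> 'a \<Rightarrow> bool"
  assumes "simple_graph V E"
  shows "gamma_222 V E = 4 \<longleftrightarrow>
           (gamma_x2t V E = 4
            \<or> (gamma_t V E = 2 \<and> min_degree V E = 1)
            \<or> (gamma_t V E = 2 \<and> gamma_x2t V E \<ge> 4))"
proof
  note G = assms
  have fV: "finite V" using G unfolding simple_graph_def by auto
  assume g4: "gamma_222 V E = 4"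
  then have ne: "V \<noteq> {}" using empty_cases(3)[of V E] by auto
  obtain f where f: "feas222 V E f" "sum f V = 4"
    using g222_obtain[of V E 4] g4 by (auto simp: numeral_eq_enat)
  have x4: "gamma_x2t V E \<ge> 4" using gx_ge_g222[OF G] g4 by simp
  show "gamma_x2t V E = 4
            \<or> (gamma_t V E = 2 \<and> min_degree V E = 1)
            \<or> (gamma_t V E = 2 \<and> gamma_x2t V E \<ge> 4)"
  proof (cases "\<exists>u\<in>V. f u = 2")
    case True
    then obtain u where "u \<in> V" "f u = 2" by auto
    then have "gamma_t V E \<le> 2" using key4[OF G f] by auto
    then have "gamma_t V E = 2" using t_ge2[OF G ne] by simp
    then show ?thesis using x4 by simp
  next
    case False
    then have le1: "\<forall>v\<in>V. f v \<le> 1" using f(1) unfolding feas222_def by force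
    define S where "S = {v\<in>V. f v = 1}"
    have cnt: "sum f A = card (A \<inter> S)" if "finite A" "A \<subseteq> V" for A
    proof -
      have "sum f A = card {v\<in>A. f v = 1}" using sum01[OF that(1), of f] le1 that(2) by auto
      also have "{v\<in>A. f v = 1} = A \<inter> S" unfolding S_def using that(2) by auto
      finally show ?thesis .
    qed
    have deg: "\<forall>v\<in>V. card (nbhd V E v \<inter> S) \<ge> 2"
      using f(1) cnt[OF nb_fin[OF G] nb_sub] unfolding feas222_def by auto
    have SV: "S \<subseteq> V" unfolding S_def by auto
    have "card S = 4" using cnt[OF fV] f(2) SV by (simp add: Int_absorb1)
    then have "gamma_x2t V E \<le> 4" using gx_le[OF SV deg] by (simp add: numeral_eq_enat)
    then show ?thesis using x4 by simp
  qed
next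
  note G = assms
  have fV: "finite V" using G unfolding simple_graph_def by auto
  assume R: "gamma_x2t V E = 4
            \<or> (gamma_t V E = 2 \<and> min_degree V E = 1)
            \<or> (gamma_t V E = 2 \<and> gamma_x2t V E \<ge> 4)"
  have ne: "V \<noteq> {}" using R empty_cases[of V E] by auto
  have le: "gamma_222 V E \<le> 4" using R gx_ge_g222[OF G] t2_le4[OF G] by auto
  have "\<not> gamma_222 V E < 4"
  proof
    assume "gamma_222 V E < 4"
    then obtain k where k: "gamma_222 V E = enat k" "k < 4"
      by (metis enat_ord_simps(2) less_enatE numeral_eq_enat)
    obtain f where f: "feas222 V E f" "sum f V = k" using g222_obtain[OF k(1)] by blast
    obtain S where S: "S \<subseteq> V" "card S = 3" "\<forall>v\<in>V. card (nbhd V E v \<inter> S) \<ge> 2"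
      using key3[OF G ne f(1)] f(2) k(2) by auto
    have x3: "gamma_x2t V E \<le> 3" using gx_le[OF S(1) S(3)] S(2) by (simp add: numeral_eq_enat)
    have "min_degree V E \<noteq> 1"
    proof
      assume "min_degree V E = 1"
      then have "1 \<in> (\<lambda>v. card (nbhd V E v)) ` V"
        unfolding min_degree_def using Min_in[of "(\<lambda>v. card (nbhd V E v)) ` V"] fV ne by auto
      then obtain v where v: "v \<in> V" "card (nbhd V E v) = 1" by auto
      have "card (nbhd V E v \<inter> S) \<le> card (nbhd V E v)"
        by (rule card_mono) (use nb_fin[OF G] in auto)
      then show False using v S(3) by auto
    qed
    moreover have "\<not> gamma_x2t V E \<ge> 4" using x3 by (cases "gamma_x2t V E") (auto simp: numeral_eq_enat)
    ultimately show False using R by auto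
  qed
  then show "gamma_222 V E = 4" using le by simp
qed

end
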